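(* Let $\mu$ be an exterior $3$-form in a $6$-dimensional real vector space $V$, let $\xi^1,\dots,\xi^6$ be a basis of $V^*$, and let $H'$ be the set of all $\xi\in V^*$ such that the $4$-form $\xi\wedge\mu$ is decomposable. (i) If $\mu=\xi^1\wedge\xi^2\wedge\xi^3+\xi^3\wedge\xi^4\wedge\xi^5+\xi^5\wedge\xi^6\wedge\xi^1$, then $H'$ equals the linear span of $\xi^1,\xi^3,\xi^5$. (ii) If $\mu=\xi^1\wedge\xi^2\wedge\xi^3+\xi^4\wedge\xi^5\wedge\xi^6$, then $H'$ is the set-theoretic union of the span of $\xi^1,\xi^2,\xi^3$ and the span of $\xi^4,\xi^5,\xi^6$.
   Context: A $p$-form is decomposable if it is an exterior product of $p$ $1$-forms (the zero form counts as decomposable). *)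

theory Defs
  imports "HOL-Analysis.Analysis"
begin

text \<open>Exterior p-forms on a real vector space V are modelled as alternating
multilinear functions of p vector arguments; the arguments are supplied as a
sequence v :: nat => V of which only v 0, ..., v (p-1) are used.\<close>

type_synonym 'v form = "(nat \<Rightarrow> 'v) \<Rightarrow> real"

definition wedge_list :: "('v \<Rightarrow> real) list \<Rightarrow> 'v form" where
  "wedge_list as v =
     (\<Sum>p | p permutes {..<length as}.
        of_int (sign p) * (\<Prod>i<length as. (as ! i) (v (p i))))"

definition drop_arg :: "nat \<Rightarrow> (nat \<Rightarrow> 'v) \<Rightarrow> (nat \<Rightarrow> 'v)" where
  "drop_arg j v = (\<lambda>i. if i < j then v i else v (Suc i))"

definition wedge1 :: "('v \<Rightarrow> real) \<Rightarrow> nat \<Rightarrow> 'v form \<Rightarrow> 'v form" where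
  "wedge1 \<xi> k w v = (\<Sum>j\<le>k. (-1) ^ j * \<xi> (v j) * w (drop_arg j v))"

text \<open>A p-form is decomposable if it is an exterior product of p 1-forms
(the zero form is included, taking a zero factor).\<close>
definition decomposable :: "nat \<Rightarrow> ('v::real_vector) form \<Rightarrow> bool" where
  "decomposable p w \<longleftrightarrow>
     (\<exists>as. length as = p \<and> (\<forall>a\<in>set as. linear a) \<and> (\<forall>v. w v = wedge_list as v))"

end

theory Submission
  imports Defs "Jordan_Normal_Form.Determinant"
begin


lemma wl_det: "wedge_list as v = det (mat (length as) (length as) (\<lambda>(i,j). (as!i) (v j)))"
  unfolding wedge_list_def
  by (subst det_def'[of _ "length as"]) (auto simp: atLeast0LessThan intro!: sum.cong prod.cong)

lemma wl_Cons: "wedge_list (a#as) v = (\<Sum>j\<le>length as. (-1)^j * a (v j) * wedge_list as (drop_arg j v))"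
proof -
  let ?n = "length as"
  let ?A = "mat (Suc ?n) (Suc ?n) (\<lambda>(i,j). ((a#as)!i) (v j))"
  have "wedge_list (a#as) v = det ?A" by (simp add: wl_det)
  also have "\<dots> = (\<Sum>j<Suc ?n. ?A $$ (0,j) * cofactor ?A 0 j)"
    by (rule laplace_expansion_row) auto
  also have "\<dots> = (\<Sum>j\<le>?n. (-1)^j * a (v j) * wedge_list as (drop_arg j v))"
  proof (rule sum.cong)
    fix j assume j: "j \<in> {..?n}"
    have "mat_delete ?A 0 j = mat ?n ?n (\<lambda>(i,k). (as!i) (drop_arg j v k))"
      unfolding mat_delete_def by (rule eq_matI) (auto simp: drop_arg_def)
    then show "?A $$ (0,j) * cofactor ?A 0 j = (-1)^j * a (v j) * wedge_list as (drop_arg j v)"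
      using j unfolding cofactor_def by (simp add: wl_det)
  qed (auto simp: lessThan_Suc_atMost)
  finally show ?thesis .
qed

lemma wl_Nil: "wedge_list [] v = 1"
  unfolding wedge_list_def by simp



lemma riesz:
  fixes f :: "'v::euclidean_space \<Rightarrow> real"
  assumes "linear f"
  shows "f x = (\<Sum>b\<in>Basis. f b *\<^sub>R b) \<bullet> x"
proof -
  have "f x = f (\<Sum>b\<in>Basis. (x \<bullet> b) *\<^sub>R b)" by (simp add: euclidean_representation)
  also have "\<dots> = (\<Sum>b\<in>Basis. (x \<bullet> b) * f b)"
    using assms by (simp add: linear_sum linear_scale)
  also have "\<dots> = (\<Sum>b\<in>Basis. f b *\<^sub>R b) \<bullet> x"
    by (simp add: inner_sum_left inner_commute mult.commute inner_sum_right)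
  finally show ?thesis .
qed

lemma dual_basis:
  fixes \<xi> :: "nat \<Rightarrow> ('v::euclidean_space \<Rightarrow> real)"
  assumes dim6: "DIM('v) = 6"
    and lin: "\<And>i. i \<in> {1..6} \<Longrightarrow> linear (\<xi> i)"
    and indep: "\<And>c. (\<forall>x. (\<Sum>i=1..6. c i * \<xi> i x) = 0) \<Longrightarrow> (\<forall>i\<in>{1..6}. c i = 0)"
  shows "\<exists>u. (\<forall>i\<in>{1..6}. \<forall>j\<in>{1..6}. \<xi> i (u j) = (if i = j then 1 else 0))
            \<and> (\<forall>x. x = (\<Sum>j=1..6. \<xi> j x *\<^sub>R u j))"
proof -
  define w where "w i = (\<Sum>b\<in>Basis. \<xi> i b *\<^sub>R b)" for i
  have xw: "\<xi> i x = w i \<bullet> x" if "i \<in> {1..6}" for i x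
    unfolding w_def by (rule riesz[OF lin[OF that]])
  have inj: "inj_on w {1..6}"
  proof (rule inj_onI, rule ccontr)
    fix i k assume ik: "i \<in> {1..6}" "k \<in> {1..6}" "w i = w k" "i \<noteq> k"
    define c where "c l = (if l = i then 1 else if l = k then -1 else (0::real))" for l
    have "(\<Sum>l=1..6. c l * \<xi> l x) = 0" for x
    proof -
      have "(\<Sum>l=1..6. c l * \<xi> l x) = (\<Sum>l\<in>{i,k}. c l * \<xi> l x)"
        by (rule sum.mono_neutral_right) (use ik in \<open>auto simp: c_def\<close>)
      also have "\<dots> = 0" using ik by (simp add: c_def xw)
      finally show ?thesis .
    qed
    then have "c i = 0" using indep ik by blast
    then show False by (simp add: c_def)
  qed
  let ?W = "w ` {1..6}"
  have indW: "independent ?W"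
  proof (rule independent_if_scalars_zero)
    show "finite ?W" by simp
    fix f x assume s: "(\<Sum>x\<in>?W. f x *\<^sub>R x) = 0" and x: "x \<in> ?W"
    have s2: "(\<Sum>l=1..6. f (w l) *\<^sub>R w l) = 0" using s sum.reindex_cong[OF inj refl, of "\<lambda>x. f x *\<^sub>R x" "\<lambda>l. f (w l) *\<^sub>R w l"] by simp
    have "(\<Sum>l=1..6. f (w l) * \<xi> l y) = 0" for y
    proof -
      have "(\<Sum>l=1..6. f (w l) * \<xi> l y) = (\<Sum>l=1..6. f (w l) *\<^sub>R w l) \<bullet> y"
        by (simp add: inner_sum_left xw)
      then show ?thesis using s2 by simp
    qed
    then have "\<forall>l\<in>{1..6}. f (w l) = 0" using indep[of "\<lambda>l. f (w l)"] by blast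
    then show "f x = 0" using x by auto
  qed
  have cardW: "card ?W = 6" using card_image[OF inj] by simp
  have spanW: "span ?W = UNIV"
    using card_ge_dim_independent[of ?W UNIV] indW cardW dim6 by (auto simp: dim_UNIV)
  have orth0: "y = 0" if "\<And>k. k \<in> {1..6} \<Longrightarrow> w k \<bullet> y = 0" for y
  proof -
    have "real_inner_class.orthogonal y y"
      by (rule orthogonal_to_span[of y ?W]) (use that spanW in \<open>auto simp: real_inner_class.orthogonal_def inner_commute\<close>)
    then show ?thesis by (simp add: real_inner_class.orthogonal_def)
  qed
  have "\<exists>u. \<forall>i\<in>{1..6}. \<xi> i u = (if i = j then 1 else 0)" if j: "j \<in> {1..6}" for j
  proof -
    let ?S = "w ` ({1..6} - {j})"
    have "dim ?S \<le> card ?S" by (rule dim_le_card) (auto intro: span_base simp del: atLeastAtMost_iff)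
    also have "\<dots> \<le> card ({1..6::nat} - {j})" by (rule card_image_le) simp
    also have "\<dots> = 5" using j by simp
    finally have "dim ?S < DIM('v)" using dim6 by simp
    then obtain z where z: "z \<noteq> 0" "\<And>y. y \<in> span ?S \<Longrightarrow> real_inner_class.orthogonal z y"
      by (rule orthogonal_to_subspace_exists) auto
    have zk: "w k \<bullet> z = 0" if "k \<in> {1..6}" "k \<noteq> j" for k
      using z(2)[of "w k"] that by (auto simp: real_inner_class.orthogonal_def inner_commute span_base)
    have "w j \<bullet> z \<noteq> 0"
    proof
      assume "w j \<bullet> z = 0"
      then have "z = 0" using zk by (intro orth0) (metis)
      then show False using z by simp
    qed
    then show ?thesis
      by (intro exI[of _ "z /\<^sub>R (w j \<bullet> z)"]) (auto simp: xw zk)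
  qed
  then obtain u where u: "\<And>j i. j \<in> {1..6} \<Longrightarrow> i \<in> {1..6} \<Longrightarrow> \<xi> i (u j) = (if i = j then 1 else 0)"
    by metis
  have "x = (\<Sum>j=1..6. \<xi> j x *\<^sub>R u j)" for x
  proof -
    have "x - (\<Sum>j=1..6. \<xi> j x *\<^sub>R u j) = 0"
    proof (rule orth0)
      fix k :: nat assume k: "k \<in> {1..6}"
      have "w k \<bullet> (\<Sum>j=1..6. \<xi> j x *\<^sub>R u j) = (\<Sum>j=1..6. \<xi> j x * (if k = j then 1 else 0))"
        using k by (auto simp: inner_sum_right u xw[symmetric] intro!: sum.cong)
      also have "\<dots> = \<xi> k x" using k by (simp add: if_distrib[of "\<lambda>t. _ * t"] sum.delta cong: if_cong)
      finally show "w k \<bullet> (x - (\<Sum>j=1..6. \<xi> j x *\<^sub>R u j)) = 0"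
        using k by (simp add: inner_diff_right xw)
    qed
    then show ?thesis by simp
  qed
  then show ?thesis using u by blast
qed



definition sq :: "'v \<Rightarrow> 'v \<Rightarrow> 'v \<Rightarrow> 'v \<Rightarrow> nat \<Rightarrow> 'v" where
  "sq x y a b i = (if i = 0 then x else if i = 1 then y else if i = 2 then a else b)"

definition D4 :: "real \<Rightarrow> real \<Rightarrow> real \<Rightarrow> real \<Rightarrow> real \<Rightarrow> real \<Rightarrow> real \<Rightarrow> real \<Rightarrow>real \<Rightarrow> real \<Rightarrow> real \<Rightarrow> real \<Rightarrow>real \<Rightarrow> real \<Rightarrow> real \<Rightarrow> real \<Rightarrow> real" where
"D4 a11 a12 a13 a14 a21 a22 a23 a24 a31 a32 a33 a34 a41 a42 a43 a44 =
  a11*(a22*(a33*a44-a34*a43) - a23*(a32*a44-a34*a42) + a24*(a32*a43-a33*a42))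
 -a12*(a21*(a33*a44-a34*a43) - a23*(a31*a44-a34*a41) + a24*(a31*a43-a33*a41))
 +a13*(a21*(a32*a44-a34*a42) - a22*(a31*a44-a34*a41) + a24*(a31*a42-a32*a41))
 -a14*(a21*(a32*a43-a33*a42) - a22*(a31*a43-a33*a41) + a23*(a31*a42-a32*a41))"

lemma pl0: "D4 x1 y1 a1 b1 x2 y2 a2 b2 x3 y3 a3 b3 x4 y4 a4 b4 * D4 x1 y1 c1 d1 x2 y2 c2 d2 x3 y3 c3 d3 x4 y4 c4 d4
 - D4 x1 y1 a1 c1 x2 y2 a2 c2 x3 y3 a3 c3 x4 y4 a4 c4 * D4 x1 y1 b1 d1 x2 y2 b2 d2 x3 y3 b3 d3 x4 y4 b4 d4
 + D4 x1 y1 a1 d1 x2 y2 a2 d2 x3 y3 a3 d3 x4 y4 a4 d4 * D4 x1 y1 b1 c1 x2 y2 b2 c2 x3 y3 b3 c3 x4 y4 b4 c4 = 0"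
  unfolding D4_def by Groebner_Basis.algebra

lemma wl4: "wedge_list [f1,f2,f3,f4] (sq x y a b) =
  D4 (f1 x) (f1 y) (f1 a) (f1 b) (f2 x) (f2 y) (f2 a) (f2 b) (f3 x) (f3 y) (f3 a) (f3 b) (f4 x) (f4 y) (f4 a) (f4 b)"
  by (simp add: wl_Cons wl_Nil drop_arg_def sq_def D4_def)

lemma pl: "wedge_list [f1,f2,f3,f4] (sq x y a b) * wedge_list [f1,f2,f3,f4] (sq x y c d)
  - wedge_list [f1,f2,f3,f4] (sq x y a c) * wedge_list [f1,f2,f3,f4] (sq x y b d)
  + wedge_list [f1,f2,f3,f4] (sq x y a d) * wedge_list [f1,f2,f3,f4] (sq x y b c) = (0::real)"
  unfolding wl4 by (rule pl0)

lemma sum16: "(\<Sum>j\<in>{1..6::nat}. f j) = f 1 + f 2 + f 3 + f 4 + f 5 + (f 6 :: 'a::comm_monoid_add)"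
  by (simp add: numeral_eq_Suc add.assoc)



lemma wl3: "wedge_list [a,b,c] v = a (v 0) * (b (v 1) * c (v 2) - b (v 2) * c (v 1))
   - a (v 1) * (b (v 0) * c (v 2) - b (v 2) * c (v 0)) + a (v 2) * (b (v 0) * c (v 1) - b (v 1) * c (v 0))"
  by (simp add: wl_Cons wl_Nil drop_arg_def numeral_2_eq_2)

lemma sum4: "(\<Sum>j\<le>3::nat. f j) = f 0 + f 1 + f 2 + (f 3 :: 'a::comm_monoid_add)"
  by (simp add: numeral_eq_Suc add.assoc)

lemma sq_simps: "sq x y a b 0 = x" "sq x y a b (Suc 0) = y" "sq x y a b 1 = y" "sq x y a b 2 = a" "sq x y a b 3 = b"
  by (simp_all add: sq_def)

lemma w1sq: "wedge1 \<eta> 3 w (sq x y a b) = \<eta> x * w (sq y a b b) - \<eta> y * w (sq x a b b)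
   + \<eta> a * w (sq x y b b) - \<eta> b * w (sq x y a b)"
proof -
  have "drop_arg 0 (sq x y a b) = sq y a b b" "drop_arg 1 (sq x y a b) = sq x a b b"
       "drop_arg 2 (sq x y a b) = sq x y b b" "drop_arg 3 (sq x y a b) = sq x y a b"
    by (auto simp: drop_arg_def sq_def fun_eq_iff)
  then show ?thesis by (simp add: wedge1_def sum4 sq_simps)
qed

lemma wl3sq: "wedge_list [f,g,h] (sq x y a b) = f x * (g y * h a - g a * h y)
   - f y * (g x * h a - g a * h x) + f a * (g x * h y - g y * h x)"
  by (simp add: wl3 sq_def)

lemma lin3:
  assumes "linear f" "linear g" "linear h"
  shows "linear (\<lambda>x. a * f x + b * g x + c * (h x::real))"
proof (rule linearI)
  fix x y show "a * f (x + y) + b * g (x + y) + c * h (x + y) = a * f x + b * g x + c * h x + (a * f y + b * g y + c * h y)"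
    using linear_add[OF assms(1)] linear_add[OF assms(2)] linear_add[OF assms(3)] by (simp add: algebra_simps)
next
  fix r x show "a * f (r *\<^sub>R x) + b * g (r *\<^sub>R x) + c * h (r *\<^sub>R x) = r *\<^sub>R (a * f x + b * g x + c * h x)"
    using linear_scale[OF assms(1)] linear_scale[OF assms(2)] linear_scale[OF assms(3)] by (simp add: algebra_simps)
qed

lemma eta_expand:
  fixes \<xi> :: "nat \<Rightarrow> ('v::euclidean_space \<Rightarrow> real)" and u :: "nat \<Rightarrow> 'v"
  assumes lin: "\<And>i. i \<in> {1..6} \<Longrightarrow> linear (\<xi> i)"
  and uu: "\<And>i j. i \<in> {1..6} \<Longrightarrow> j \<in> {1..6} \<Longrightarrow> \<xi> i (u j) = (if i = j then 1 else 0)"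
  and ux: "\<And>x. x = (\<Sum>j=1..6. \<xi> j x *\<^sub>R u j)"
  assumes eta: "linear \<eta>"
  shows "\<eta> x = \<eta> (u 1) * \<xi> 1 x + \<eta> (u 2) * \<xi> 2 x + \<eta> (u 3) * \<xi> 3 x
     + \<eta> (u 4) * \<xi> 4 x + \<eta> (u 5) * \<xi> 5 x + \<eta> (u 6) * \<xi> 6 x"
proof -
  have "\<eta> x = \<eta> (\<Sum>j=1..6. \<xi> j x *\<^sub>R u j)" by (rule arg_cong[where f=\<eta>, OF ux])
  also have "\<dots> = (\<Sum>j=1..6. \<xi> j x * \<eta> (u j))" using eta by (simp add: linear_sum linear_scale)
  also have "\<dots> = \<eta> (u 1) * \<xi> 1 x + \<eta> (u 2) * \<xi> 2 x + \<eta> (u 3) * \<xi> 3 x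
     + \<eta> (u 4) * \<xi> 4 x + \<eta> (u 5) * \<xi> 5 x + \<eta> (u 6) * \<xi> 6 x"
    by (simp only: sum16) (simp add: mult.commute)
  finally show ?thesis .
qed

lemma plR:
  assumes dec: "decomposable 4 \<Omega>"
  shows "\<Omega> (sq x y a b) * \<Omega> (sq x y c d) - \<Omega> (sq x y a c) * \<Omega> (sq x y b d)
    + \<Omega> (sq x y a d) * \<Omega> (sq x y b c) = 0"
proof -
  obtain as where len4: "length as = 4" and eq: "\<And>v. \<Omega> v = wedge_list as v"
    using dec unfolding decomposable_def by blast
  obtain f1 f2 f3 f4 where as: "as = [f1,f2,f3,f4]"
    using len4 by (auto simp: numeral_eq_Suc length_Suc_conv)
  show ?thesis unfolding eq as by (rule pl)
qed

lemma part1: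
  fixes \<xi> :: "nat \<Rightarrow> ('v::euclidean_space \<Rightarrow> real)" and u :: "nat \<Rightarrow> 'v"
  assumes lin: "\<And>i. i \<in> {1..6} \<Longrightarrow> linear (\<xi> i)"
  and uu: "\<And>i j. i \<in> {1..6} \<Longrightarrow> j \<in> {1..6} \<Longrightarrow> \<xi> i (u j) = (if i = j then 1 else 0)"
  and ux: "\<And>x. x = (\<Sum>j=1..6. \<xi> j x *\<^sub>R u j)"
  and \<mu>_def: "\<mu> = (\<lambda>v. wedge_list [\<xi> 1, \<xi> 2, \<xi> 3] v + wedge_list [\<xi> 3, \<xi> 4, \<xi> 5] v + wedge_list [\<xi> 5, \<xi> 6, \<xi> 1] v)"
  shows "{\<eta>. linear \<eta> \<and> decomposable 4 (wedge1 \<eta> 3 \<mu>)} = {\<lambda>x. a * \<xi> 1 x + b * \<xi> 3 x + c * \<xi> 5 x | a b c. True}"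
proof (rule Set.set_eqI, rule iffI)
  fix \<eta> assume "\<eta> \<in> {\<eta>. linear \<eta> \<and> decomposable 4 (wedge1 \<eta> 3 \<mu>)}"
  then have eta: "linear \<eta>" and dec: "decomposable 4 (wedge1 \<eta> 3 \<mu>)" by auto
  note R = plR[OF dec]
  have e6: "\<eta> (u 6) = 0"
    using R[of "u 3" "u 6" "u 1" "u 2" "u 4" "u 5"] by (simp add: w1sq \<mu>_def wl3sq uu)
  have e2: "\<eta> (u 2) = 0"
    using R[of "u 2" "u 5" "u 3" "u 4" "u 1" "u 6"] by (simp add: w1sq \<mu>_def wl3sq uu)
  have e4: "\<eta> (u 4) = 0"
    using R[of "u 1" "u 4" "u 5" "u 6" "u 2" "u 3"] by (simp add: w1sq \<mu>_def wl3sq uu)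
  have "\<eta> = (\<lambda>x. \<eta> (u 1) * \<xi> 1 x + \<eta> (u 3) * \<xi> 3 x + \<eta> (u 5) * \<xi> 5 x)"
    by (rule ext, subst eta_expand[OF lin uu ux eta]) (simp_all add: e2 e4 e6)
  then show "\<eta> \<in> {\<lambda>x. a * \<xi> 1 x + b * \<xi> 3 x + c * \<xi> 5 x | a b c. True}" by blast
next
  fix \<eta> assume "\<eta> \<in> {\<lambda>x. a * \<xi> 1 x + b * \<xi> 3 x + c * \<xi> 5 x | a b c. True}"
  then obtain a b c where \<eta>: "\<eta> = (\<lambda>x. a * \<xi> 1 x + b * \<xi> 3 x + c * \<xi> 5 x)" by blast
  have "linear \<eta>" unfolding \<eta> by (rule lin3) (simp_all add: lin)
  moreover have "decomposable 4 (wedge1 \<eta> 3 \<mu>)"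
    unfolding decomposable_def
  proof (intro exI conjI allI)
    let ?as = "[\<xi> 1, \<xi> 3, \<xi> 5, \<lambda>x. (-a) * \<xi> 4 x + (-b) * \<xi> 6 x + (-c) * \<xi> 2 x]"
    show "length ?as = 4" by simp
    have "linear (\<lambda>x. (-a) * \<xi> 4 x + (-b) * \<xi> 6 x + (-c) * \<xi> 2 x)"
      by (rule lin3) (simp_all add: lin)
    then show "\<forall>f\<in>set ?as. linear f" using lin by simp
    fix v show "wedge1 \<eta> 3 \<mu> v = wedge_list ?as v"
      unfolding \<eta> \<mu>_def
      by (simp add: wedge1_def sum4 wl3 wl_Cons wl_Nil drop_arg_def numeral_2_eq_2 numeral_3_eq_3) Groebner_Basis.algebra
  qed
  ultimately show "\<eta> \<in> {\<eta>. linear \<eta> \<and> decomposable 4 (wedge1 \<eta> 3 \<mu>)}" by blast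
qed

lemma part2:
  fixes \<xi> :: "nat \<Rightarrow> ('v::euclidean_space \<Rightarrow> real)" and u :: "nat \<Rightarrow> 'v"
  assumes lin: "\<And>i. i \<in> {1..6} \<Longrightarrow> linear (\<xi> i)"
  and uu: "\<And>i j. i \<in> {1..6} \<Longrightarrow> j \<in> {1..6} \<Longrightarrow> \<xi> i (u j) = (if i = j then 1 else 0)"
  and ux: "\<And>x. x = (\<Sum>j=1..6. \<xi> j x *\<^sub>R u j)"
  and \<mu>_def: "\<mu> = (\<lambda>v. wedge_list [\<xi> 1, \<xi> 2, \<xi> 3] v + wedge_list [\<xi> 4, \<xi> 5, \<xi> 6] v)"
  shows "{\<eta>. linear \<eta> \<and> decomposable 4 (wedge1 \<eta> 3 \<mu>)} =
    {\<lambda>x. a * \<xi> 1 x + b * \<xi> 2 x + c * \<xi> 3 x | a b c. True}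
    \<union> {\<lambda>x. a * \<xi> 4 x + b * \<xi> 5 x + c * \<xi> 6 x | a b c. True}"
proof (rule Set.set_eqI, rule iffI)
  fix \<eta> assume "\<eta> \<in> {\<eta>. linear \<eta> \<and> decomposable 4 (wedge1 \<eta> 3 \<mu>)}"
  then have eta: "linear \<eta>" and dec: "decomposable 4 (wedge1 \<eta> 3 \<mu>)" by auto
  note R = plR[OF dec]
  have r14: "\<eta> (u 1) = 0 \<or> \<eta> (u 4) = 0"
    using R[of "u 1" "u 4" "u 2" "u 3" "u 5" "u 6"] by (auto simp add: w1sq \<mu>_def wl3sq uu)
  have r15: "\<eta> (u 1) = 0 \<or> \<eta> (u 5) = 0"
    using R[of "u 1" "u 5" "u 2" "u 3" "u 4" "u 6"] by (auto simp add: w1sq \<mu>_def wl3sq uu)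
  have r16: "\<eta> (u 1) = 0 \<or> \<eta> (u 6) = 0"
    using R[of "u 1" "u 6" "u 2" "u 3" "u 4" "u 5"] by (auto simp add: w1sq \<mu>_def wl3sq uu)
  have r24: "\<eta> (u 2) = 0 \<or> \<eta> (u 4) = 0"
    using R[of "u 2" "u 4" "u 1" "u 3" "u 5" "u 6"] by (auto simp add: w1sq \<mu>_def wl3sq uu)
  have r25: "\<eta> (u 2) = 0 \<or> \<eta> (u 5) = 0"
    using R[of "u 2" "u 5" "u 1" "u 3" "u 4" "u 6"] by (auto simp add: w1sq \<mu>_def wl3sq uu)
  have r26: "\<eta> (u 2) = 0 \<or> \<eta> (u 6) = 0"
    using R[of "u 2" "u 6" "u 1" "u 3" "u 4" "u 5"] by (auto simp add: w1sq \<mu>_def wl3sq uu)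
  have r34: "\<eta> (u 3) = 0 \<or> \<eta> (u 4) = 0"
    using R[of "u 3" "u 4" "u 1" "u 2" "u 5" "u 6"] by (auto simp add: w1sq \<mu>_def wl3sq uu)
  have r35: "\<eta> (u 3) = 0 \<or> \<eta> (u 5) = 0"
    using R[of "u 3" "u 5" "u 1" "u 2" "u 4" "u 6"] by (auto simp add: w1sq \<mu>_def wl3sq uu)
  have r36: "\<eta> (u 3) = 0 \<or> \<eta> (u 6) = 0"
    using R[of "u 3" "u 6" "u 1" "u 2" "u 4" "u 5"] by (auto simp add: w1sq \<mu>_def wl3sq uu)
  note ex = eta_expand[OF lin uu ux eta]
  show "\<eta> \<in> {\<lambda>x. a * \<xi> 1 x + b * \<xi> 2 x + c * \<xi> 3 x | a b c. True}
    \<union> {\<lambda>x. a * \<xi> 4 x + b * \<xi> 5 x + c * \<xi> 6 x | a b c. True}"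
  proof (cases "\<eta> (u 1) = 0 \<and> \<eta> (u 2) = 0 \<and> \<eta> (u 3) = 0")
    case True
    then have pt: "\<eta> x = \<eta> (u 4) * \<xi> 4 x + \<eta> (u 5) * \<xi> 5 x + \<eta> (u 6) * \<xi> 6 x" for x using ex[of x] by simp
    then have "\<eta> = (\<lambda>x. \<eta> (u 4) * \<xi> 4 x + \<eta> (u 5) * \<xi> 5 x + \<eta> (u 6) * \<xi> 6 x)" by (intro ext)
    then show ?thesis by blast
  next
    case False
    then have "\<eta> (u 4) = 0 \<and> \<eta> (u 5) = 0 \<and> \<eta> (u 6) = 0"
      using r14 r15 r16 r24 r25 r26 r34 r35 r36 by blast
    then have pt: "\<eta> x = \<eta> (u 1) * \<xi> 1 x + \<eta> (u 2) * \<xi> 2 x + \<eta> (u 3) * \<xi> 3 x" for x using ex[of x] by simp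
    then have "\<eta> = (\<lambda>x. \<eta> (u 1) * \<xi> 1 x + \<eta> (u 2) * \<xi> 2 x + \<eta> (u 3) * \<xi> 3 x)" by (intro ext)
    then show ?thesis by blast
  qed
next
  fix \<eta> assume "\<eta> \<in> {\<lambda>x. a * \<xi> 1 x + b * \<xi> 2 x + c * \<xi> 3 x | a b c. True}
    \<union> {\<lambda>x. a * \<xi> 4 x + b * \<xi> 5 x + c * \<xi> 6 x | a b c. True}"
  then show "\<eta> \<in> {\<eta>. linear \<eta> \<and> decomposable 4 (wedge1 \<eta> 3 \<mu>)}"
  proof (rule UnE)
  assume "\<eta> \<in> {\<lambda>x. a * \<xi> 1 x + b * \<xi> 2 x + c * \<xi> 3 x | a b c. True}"
  then obtain a b c where \<eta>: "\<eta> = (\<lambda>x. a * \<xi> 1 x + b * \<xi> 2 x + c * \<xi> 3 x)" by blast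
  have eta: "linear \<eta>" unfolding \<eta> by (rule lin3) (simp_all add: lin)
  moreover have "decomposable 4 (wedge1 \<eta> 3 \<mu>)"
    unfolding decomposable_def
  proof (intro exI conjI allI)
    let ?as = "[\<eta>, \<xi> 4, \<xi> 5, \<xi> 6]"
    show "length ?as = 4" by simp
    show "\<forall>f\<in>set ?as. linear f" using lin eta by simp
    fix v show "wedge1 \<eta> 3 \<mu> v = wedge_list ?as v"
      unfolding \<eta> \<mu>_def
      by (simp add: wedge1_def sum4 wl3 wl_Cons wl_Nil drop_arg_def numeral_2_eq_2 numeral_3_eq_3) Groebner_Basis.algebra
  qed
  ultimately show "\<eta> \<in> {\<eta>. linear \<eta> \<and> decomposable 4 (wedge1 \<eta> 3 \<mu>)}" by blast
  next
  assume "\<eta> \<in> {\<lambda>x. a * \<xi> 4 x + b * \<xi> 5 x + c * \<xi> 6 x | a b c. True}"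
  then obtain a b c where \<eta>: "\<eta> = (\<lambda>x. a * \<xi> 4 x + b * \<xi> 5 x + c * \<xi> 6 x)" by blast
  have eta: "linear \<eta>" unfolding \<eta> by (rule lin3) (simp_all add: lin)
  moreover have "decomposable 4 (wedge1 \<eta> 3 \<mu>)"
    unfolding decomposable_def
  proof (intro exI conjI allI)
    let ?as = "[\<eta>, \<xi> 1, \<xi> 2, \<xi> 3]"
    show "length ?as = 4" by simp
    show "\<forall>f\<in>set ?as. linear f" using lin eta by simp
    fix v show "wedge1 \<eta> 3 \<mu> v = wedge_list ?as v"
      unfolding \<eta> \<mu>_def
      by (simp add: wedge1_def sum4 wl3 wl_Cons wl_Nil drop_arg_def numeral_2_eq_2 numeral_3_eq_3) Groebner_Basis.algebra
  qed
  ultimately show "\<eta> \<in> {\<eta>. linear \<eta> \<and> decomposable 4 (wedge1 \<eta> 3 \<mu>)}" by blast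
  qed
qed


theorem lemma4p3:
  fixes \<xi> :: "nat \<Rightarrow> ('v::euclidean_space \<Rightarrow> real)"
  assumes dim6: "DIM('v) = 6"
    and lin: "\<And>i. i \<in> {1..6} \<Longrightarrow> linear (\<xi> i)"
    and indep: "\<And>c. (\<forall>x. (\<Sum>i=1..6. c i * \<xi> i x) = 0) \<Longrightarrow> (\<forall>i\<in>{1..6}. c i = 0)"
  shows
    "(let \<mu> = (\<lambda>v. wedge_list [\<xi> 1, \<xi> 2, \<xi> 3] v + wedge_list [\<xi> 3, \<xi> 4, \<xi> 5] v
                    + wedge_list [\<xi> 5, \<xi> 6, \<xi> 1] v)
      in {\<eta>. linear \<eta> \<and> decomposable 4 (wedge1 \<eta> 3 \<mu>)}
         = {\<lambda>x. a * \<xi> 1 x + b * \<xi> 3 x + c * \<xi> 5 x | a b c. True})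
   \<and>
    (let \<mu> = (\<lambda>v. wedge_list [\<xi> 1, \<xi> 2, \<xi> 3] v + wedge_list [\<xi> 4, \<xi> 5, \<xi> 6] v)
      in {\<eta>. linear \<eta> \<and> decomposable 4 (wedge1 \<eta> 3 \<mu>)}
         = {\<lambda>x. a * \<xi> 1 x + b * \<xi> 2 x + c * \<xi> 3 x | a b c. True}
           \<union> {\<lambda>x. a * \<xi> 4 x + b * \<xi> 5 x + c * \<xi> 6 x | a b c. True})"
  proof -
  obtain u where uu0: "\<forall>i\<in>{1..6}. \<forall>j\<in>{1..6}. \<xi> i (u j) = (if i = j then 1 else 0)"
    and ux: "\<forall>x. x = (\<Sum>j=1..6. \<xi> j x *\<^sub>R u j)"
    using dual_basis[of \<xi>, OF dim6 lin indep] by blast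
  have uu: "\<And>i j. i \<in> {1..6} \<Longrightarrow> j \<in> {1..6} \<Longrightarrow> \<xi> i (u j) = (if i = j then 1 else 0)"
    using uu0 by blast
  show ?thesis
    unfolding Let_def using part1[OF lin uu ux[rule_format] refl] part2[OF lin uu ux[rule_format] refl] by blast
qed

end
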